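(* Let $A\in\mathrm{SL}(2,\mathbb R)$ and $\tau>0$ with $A\Lambda_q\cap S_\tau\ne\emptyset$, and let $(\mathbf u_n=(q_n,a_n)^T)_{n\ge0}$ be elements of $A\Lambda_q\cap S_\tau$ with successive slopes, i.e. for each $n$, $\mathbf u_{n+1}$ is the element of $A\Lambda_q\cap S_\tau$ of smallest slope strictly greater than $a_n/q_n$. Then $s_{1/\tau}h_{a_0/q_0}A\Lambda_q$ contains the horizontal vector $(q_0/\tau,0)^T\in S_1$, and hence equals $g_{a,b}\Lambda_q$ for a unique $(a,b)\in\mathscr T^q$. Moreover: (1) for each $n\ge0$, $s_{1/\tau}h_{a_n/q_n}A\Lambda_q$ contains the horizontal vector $(q_n/\tau,0)^T\in S_1$ and $s_{1/\tau}h_{a_n/q_n}A\Lambda_q=g_{\mathrm{BCZ}_q^n(a,b)}\Lambda_q$; i.e. $\mathrm{FTR}_q(A,\tau,\mathbf u_n)=\mathrm{BCZ}_q^n(\mathrm{FTR}_q(A,\tau,\mathbf u_0))$; (2) writing $L_n^q(a,b)$ for the first coordinate of $\mathrm{BCZ}_q^n(a,b)$, we have $q_n=\tau L_n^q(a,b)=\tau L_0^q(\mathrm{BCZ}_q^n(a,b))$, and for all $n\ge0$ $$a_{n+1}=q_{n+1}\left(\frac{a_n}{q_n}+\frac1{\tau^2}R_q(\mathrm{BCZ}_q^n(a,b))\right).$$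
   Context: Fix an integer $q\ge3$, let $\lambda_q=2\cos(\pi/q)$, and let $G_q\subset \mathrm{SL}(2,\mathbb R)$ be the Hecke triangle group generated by $S=\begin{pmatrix}0&-1\\1&0\end{pmatrix}$ and $T_q=\begin{pmatrix}1&\lambda_q\\0&1\end{pmatrix}$, acting linearly on $\mathbb R^2$; $\Lambda_q=G_q(1,0)^T$, $A\Lambda_q=\{A\mathbf v:\mathbf v\in\Lambda_q\}$. Matrices: $h_s=\begin{pmatrix}1&0\\-s&1\end{pmatrix}$, $s_\tau=\begin{pmatrix}\tau&0\\0&\tau^{-1}\end{pmatrix}$, $g_{a,b}=\begin{pmatrix}a&b\\0&a^{-1}\end{pmatrix}$, with $g_{(a,b)}:=g_{a,b}$. $S_\tau=\{(x,y)^T:0<x\le\tau\}$; slope of $(x,y)^T$ with $x\ne0$ is $y/x$. $\mathscr T^q=\{(a,b):0<a\le1,\ 1-\lambda_qa<b\le1\}$. Facts (established earlier): for every $(a,b)\in\mathscr T^q$, $g_{a,b}\Lambda_q\cap S_1$ contains a vector of smallest positive slope, denoted $R_q(a,b)$ (the $G_q$-roof function); and whenever $B\Lambda_q$ ($B\in\mathrm{SL}(2,\mathbb R)$) contains a horizontal vector $(c,0)^T$ with $0<c\le1$ there is a unique $(a',b')\in\mathscr T^q$ with $B\Lambda_q=g_{a',b'}\Lambda_q$, and $a'=c$. The $G_q$-BCZ map $\mathrm{BCZ}_q:\mathscr T^q\to\mathscr T^q$ sends $(a,b)$ to the unique $(c,d)\in\mathscr T^q$ with $h_{R_q(a,b)}g_{a,b}\Lambda_q=g_{c,d}\Lambda_q$.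 For $\mathbf u\in A\Lambda_q\cap S_\tau$, the Farey triangle representative $\mathrm{FTR}_q(A,\tau,\mathbf u)$ is the unique $(a,b)\in\mathscr T^q$ with $s_{1/\tau}h_{\mathrm{slope}(\mathbf u)}A\Lambda_q=g_{a,b}\Lambda_q$. *)

theory Defs
  imports Complex_Main
begin

text \<open>2x2 real matrices are represented as quadruples (a,b,c,d) standing for
  the matrix with rows (a b) and (c d); vectors of R^2 are pairs (x,y).\<close>

type_synonym mat2 = "real \<times> real \<times> real \<times> real"
type_synonym vec2 = "real \<times> real"

fun mmul :: "mat2 \<Rightarrow> mat2 \<Rightarrow> mat2" where
  "mmul (a,b,c,d) (e,f,g,h) = (a*e + b*g, a*f + b*h, c*e + d*g, c*f + d*h)"

fun mvec :: "mat2 \<Rightarrow> vec2 \<Rightarrow> vec2" where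
  "mvec (a,b,c,d) (x,y) = (a*x + b*y, c*x + d*y)"

fun mdet :: "mat2 \<Rightarrow> real" where
  "mdet (a,b,c,d) = a*d - b*c"

definition mid :: mat2 where "mid = (1,0,0,1)"

definition lam :: "nat \<Rightarrow> real" where
  "lam q = 2 * cos (pi / real q)"

definition Smat :: mat2 where "Smat = (0,-1,1,0)"
definition Sinv :: mat2 where "Sinv = (0,1,-1,0)"
definition Tmat :: "nat \<Rightarrow> mat2" where "Tmat q = (1, lam q, 0, 1)"
definition Tinv :: "nat \<Rightarrow> mat2" where "Tinv q = (1, - lam q, 0, 1)"

inductive_set Hecke :: "nat \<Rightarrow> mat2 set" for q where
  one: "mid \<in> Hecke q"
| gen: "g \<in> Hecke q \<Longrightarrow> X \<in> {Smat, Sinv, Tmat q, Tinv q} \<Longrightarrow> mmul X g \<in> Hecke q"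

definition Lam :: "nat \<Rightarrow> vec2 set" where
  "Lam q = {mvec g (1,0) | g. g \<in> Hecke q}"

definition img :: "mat2 \<Rightarrow> vec2 set \<Rightarrow> vec2 set" where
  "img A X = mvec A ` X"

definition hmat :: "real \<Rightarrow> mat2" where "hmat s = (1, 0, -s, 1)"
definition smat :: "real \<Rightarrow> mat2" where "smat t = (t, 0, 0, 1/t)"
definition gmat :: "real \<times> real \<Rightarrow> mat2" where "gmat p = (fst p, snd p, 0, 1 / fst p)"

definition Strip :: "real \<Rightarrow> vec2 set" where
  "Strip t = {v. 0 < fst v \<and> fst v \<le> t}"

definition slope :: "vec2 \<Rightarrow> real" where
  "slope v = snd v / fst v"

definition Tq :: "nat \<Rightarrow> (real \<times> real) set" where
  "Tq q = {(a,b). 0 < a \<and> a \<le> 1 \<and> 1 - lam q * a < b \<and> b \<le> 1}"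

definition roof :: "nat \<Rightarrow> real \<times> real \<Rightarrow> real" where
  "roof q p = (THE s. \<exists>v \<in> img (gmat p) (Lam q) \<inter> Strip 1. slope v = s \<and> 0 < s \<and>
       (\<forall>w \<in> img (gmat p) (Lam q) \<inter> Strip 1. 0 < slope w \<longrightarrow> s \<le> slope w))"

definition BCZ :: "nat \<Rightarrow> real \<times> real \<Rightarrow> real \<times> real" where
  "BCZ q p = (THE r. r \<in> Tq q \<and>
       img (mmul (hmat (roof q p)) (gmat p)) (Lam q) = img (gmat r) (Lam q))"

definition FTR :: "nat \<Rightarrow> mat2 \<Rightarrow> real \<Rightarrow> vec2 \<Rightarrow> real \<times> real" where
  "FTR q A t u = (THE r. r \<in> Tq q \<and>
       img (mmul (smat (1/t)) (mmul (hmat (slope u)) A)) (Lam q) = img (gmat r) (Lam q))"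

end

theory Submission imports Defs begin

lemma mmul_assoc: "mmul (mmul X Y) Z = mmul X (mmul Y Z)"
  by (cases X rule: prod_cases4; cases Y rule: prod_cases4; cases Z rule: prod_cases4) (simp add: algebra_simps)

lemma mvec_mmul: "mvec (mmul X Y) v = mvec X (mvec Y v)"
  by (cases X rule: prod_cases4; cases Y rule: prod_cases4; cases v) (simp add: algebra_simps)

lemma mdet_mmul: "mdet (mmul X Y) = mdet X * mdet Y"
  by (cases X rule: prod_cases4; cases Y rule: prod_cases4) (simp add: algebra_simps)

lemma mmul_mid[simp]: "mmul mid X = X" "mmul X mid = X"
  by (cases X rule: prod_cases4; simp add: mid_def)+

lemma mvec_mid[simp]: "mvec mid v = v"
  by (cases v) (simp add: mid_def)

lemma img_mmul: "img (mmul X Y) S = img X (img Y S)"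
  by (auto simp: img_def image_image mvec_mmul)

lemma lam_bounds: assumes "q \<ge> 3" shows "0 < lam q" "lam q < 2"
proof -
  have q: "real q \<ge> 3" using assms by simp
  have p0: "0 < pi / real q" using q by simp
  have p1: "pi / real q < pi/2" using q pi_gt_zero by (simp add: field_simps)
  have "0 < cos (pi / real q)" using cos_gt_zero[OF p0 p1] .
  then show "0 < lam q" by (simp add: lam_def)
  have "cos (pi / real q) < cos 0" using cos_monotone_0_pi[of 0 "pi / real q"] p0 p1 by simp
  then show "lam q < 2" by (simp add: lam_def)
qed

definition sk :: "nat \<Rightarrow> nat \<Rightarrow> real" where
  "sk q j = sin (real j * (pi / real q)) / sin (pi / real q)"

definition V :: "nat \<Rightarrow> nat \<Rightarrow> mat2" where
  "V q j = (sk q (j+1), sk q (j+2), sk q j, sk q (j+1))"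

lemma sin_theta_pos: assumes "q \<ge> 3" shows "0 < sin (pi / real q)"
proof -
  have q: "real q \<ge> 3" using assms by simp
  show ?thesis by (rule sin_gt_zero) (use q pi_gt_zero in \<open>auto simp: field_simps\<close>)
qed

lemma sk_rec: assumes "q \<ge> 3" shows "sk q (j+2) = lam q * sk q (j+1) - sk q j"
proof -
  define t where "t = pi / real q"
  have "sin (real (j+2) * t) + sin (real j * t) = 2 * sin (real (j+1) * t) * cos t"
  proof -
    have a: "real (j+2) * t = real (j+1) * t + t" by (simp add: algebra_simps)
    have b: "real j * t = real (j+1) * t - t" by (simp add: algebra_simps)
    show ?thesis unfolding a b sin_add sin_diff by simp
  qed
  then show ?thesis using sin_theta_pos[OF assms]
    by (simp add: sk_def lam_def t_def field_simps)
qed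

lemma sk_0: "sk q 0 = 0" by (simp add: sk_def)
lemma sk_1: assumes "q \<ge> 3" shows "sk q 1 = 1" using sin_theta_pos[OF assms] by (simp add: sk_def)
lemma sk_2: assumes "q \<ge> 3" shows "sk q 2 = lam q"
  using sk_rec[OF assms, of 0] sk_0 sk_1[OF assms] by (simp add: numeral_2_eq_2)
lemma sk_q: assumes "q \<ge> 3" shows "sk q q = 0"
  using assms by (simp add: sk_def)
lemma sk_q1: assumes "q \<ge> 3" shows "sk q (q+1) = -1"
proof -
  have "real (q+1) * (pi / real q) = pi / real q + pi" using assms by (simp add: field_simps)
  then show ?thesis using sin_theta_pos[OF assms] by (simp add: sk_def)
qed
lemma sk_qm1: assumes "q \<ge> 3" shows "sk q (q-1) = 1"
proof -
  have "real (q-1) * (pi / real q) = pi - pi / real q" using assms by (simp add: of_nat_diff field_simps)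
  then show ?thesis using sin_theta_pos[OF assms] by (simp add: sk_def)
qed

lemma sk_nice: assumes "q \<ge> 3" "j \<le> q" shows "sk q j = 0 \<or> 1 \<le> sk q j"
proof (cases "j = 0 \<or> j = q")
  case True then show ?thesis using sk_0 sk_q[OF assms(1)] by auto
next
  case False
  define t where "t = pi / real q"
  have tp: "0 < t" using assms by (simp add: t_def)
  have qt: "real q * t = pi" using assms by (simp add: t_def)
  have j1: "1 \<le> j" "j \<le> q - 1" using False assms by auto
  have "sin t \<le> sin (real j * t)"
  proof (cases "real j * t \<le> pi/2")
    case True
    have m: "-(pi/2) \<le> t" using tp pi_gt_zero by linarith
    then show ?thesis using j1 tp True by (intro sin_monotone_2pi_le) auto
  next
    case F: False
    have e: "real j * t = pi - real (q - j) * t" using j1 qt by (simp add: of_nat_diff algebra_simps)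
    have m: "-(pi/2) \<le> t" using tp pi_gt_zero by linarith
    have "real (q - j) * t \<le> pi/2" using F e by simp
    moreover have "1 \<le> q - j" using j1 by auto
    ultimately have "sin t \<le> sin (real (q-j) * t)" using tp m by (intro sin_monotone_2pi_le) auto
    then show ?thesis using e by simp
  qed
  then show ?thesis using sin_theta_pos[OF assms(1)] by (simp add: sk_def t_def)
qed

lemma TSV: assumes "q \<ge> 3" shows "mmul (mmul (Tmat q) Smat) (V q j) = V q (Suc j)"
  using sk_rec[OF assms, of j] sk_rec[OF assms, of "j+1"]
  by (simp add: V_def Tmat_def Smat_def algebra_simps numeral_eq_Suc)

lemma V_last: assumes "q \<ge> 3" shows "V q (q-1) = Smat"
  using sk_q[OF assms] sk_q1[OF assms] sk_qm1[OF assms] assms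
  by (simp add: V_def Smat_def)

lemma V_0: assumes "q \<ge> 3" shows "V q 0 = Tmat q"
  using sk_0 sk_1[OF assms] sk_2[OF assms] by (simp add: V_def Tmat_def numeral_2_eq_2)


inductive_set Mon :: "nat \<Rightarrow> mat2 set" for q where
  mone: "mid \<in> Mon q"
| mstep: "P \<in> Mon q \<Longrightarrow> j < q - 1 \<Longrightarrow> mmul (V q j) P \<in> Mon q"

definition nice0 :: "real \<Rightarrow> bool" where "nice0 x \<longleftrightarrow> x = 0 \<or> 1 \<le> x"

lemma nice0_comb: assumes "nice0 x" "nice0 y" "nice0 z" "nice0 w" shows "nice0 (x*y + z*w)"
proof -
  have p: "nice0 (x*y)" if "nice0 x" "nice0 y" for x y :: real
    using that unfolding nice0_def
    by (metis mult_1_left mult_mono mult_zero_left mult_zero_right order_trans zero_le_one)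
  have "nice0 (x*y)" "nice0 (z*w)" using p assms by auto
  then show ?thesis unfolding nice0_def by auto
qed

lemma Mon_nice: assumes q: "q \<ge> 3" and "P \<in> Mon q"
  shows "nice0 (fst P) \<and> nice0 (fst (snd P)) \<and> nice0 (fst (snd (snd P))) \<and> nice0 (snd (snd (snd P)))"
  using assms(2)
proof induction
  case mone then show ?case by (simp add: mid_def nice0_def)
next
  case (mstep P j)
  obtain a b c d where P: "P = (a,b,c,d)" by (cases P rule: prod_cases4)
  have n: "nice0 (sk q j)" "nice0 (sk q (j+1))" "nice0 (sk q (j+2))"
    using sk_nice[OF q] mstep.hyps(2) unfolding nice0_def by auto
  show ?case using mstep.IH n unfolding P V_def by (simp add: nice0_comb)
qed

fun sc :: "real \<Rightarrow> vec2 \<Rightarrow> vec2" where "sc s (x,y) = (s*x, s*y)"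

lemma mvec_sc: "mvec X (sc s y) = sc s (mvec X y)"
  by (cases X rule: prod_cases4; cases y) (simp add: algebra_simps)

lemma sc_sc: "sc s (sc t y) = sc (s*t) y"
  by (cases y) simp

lemma sc_1[simp]: "sc 1 y = y" by (cases y) simp

definition K :: "nat \<Rightarrow> vec2 set" where
  "K q = {w. \<exists>s\<in>{1,-1}. \<exists>e\<in>{mid,Smat}. \<exists>P\<in>Mon q. \<exists>v\<in>{(1,0),(0,1)}. w = sc s (mvec e (mvec P v))}"

definition Kform :: "nat \<Rightarrow> vec2 \<Rightarrow> bool" where
  "Kform q w \<longleftrightarrow> (\<exists>s\<in>{1,-1}. \<exists>e\<in>{mid,Smat}. \<exists>P\<in>Mon q. \<exists>v\<in>{(1,0),(0,1)}. w = sc s (mvec e (mvec P v)))"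

lemma Kform_I: "s\<in>{1,-1} \<Longrightarrow> e\<in>{mid,Smat} \<Longrightarrow> P\<in>Mon q \<Longrightarrow> v\<in>{(1,0),(0,1)} \<Longrightarrow> w = sc s (mvec e (mvec P v)) \<Longrightarrow> Kform q w"
  unfolding Kform_def by blast

lemma TinvT: "mmul (Tinv q) (Tmat q) = mid" by (simp add: Tinv_def Tmat_def mid_def)
lemma TTinv: "mmul (Tmat q) (Tinv q) = mid" by (simp add: Tinv_def Tmat_def mid_def)
lemma SSinv: "mmul Smat Sinv = mid" by (simp add: Sinv_def Smat_def mid_def)
lemma SinvS: "mmul Sinv Smat = mid" by (simp add: Sinv_def Smat_def mid_def)

lemma L1: assumes q: "q \<ge> 3" shows "mvec (Tinv q) (mvec (V q (Suc j)) y) = mvec Smat (mvec (V q j) y)"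
proof -
  have "mvec (Tinv q) (mvec (V q (Suc j)) y) = mvec (mmul (mmul (Tinv q) (Tmat q)) Smat) (mvec (V q j) y)"
    by (simp add: TSV[OF q, symmetric] mvec_mmul)
  then show ?thesis by (simp add: TinvT)
qed

lemma L2: assumes q: "q \<ge> 3" shows "mvec (Tinv q) (mvec Smat y) = mvec Smat (mvec (V q (q-2)) y)"
proof -
  have "Suc (q-2) = q - 1" using q by simp
  then have "V q (q-1) = mmul (mmul (Tmat q) Smat) (V q (q-2))" using TSV[OF q, of "q-2"] by simp
  then have "Smat = mmul (mmul (Tmat q) Smat) (V q (q-2))" using V_last[OF q] by simp
  then have "mvec (Tinv q) (mvec Smat y) = mvec (Tinv q) (mvec (mmul (mmul (Tmat q) Smat) (V q (q-2))) y)"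
    by simp
  also have "\<dots> = mvec (mmul (mmul (Tinv q) (Tmat q)) Smat) (mvec (V q (q-2)) y)"
    by (simp add: mvec_mmul)
  finally show ?thesis by (simp add: TinvT)
qed

lemma core:
  assumes q: "q \<ge> 3" and e: "e\<in>{mid,Smat}" and P: "P\<in>Mon q" and v: "v\<in>{(1,0),(0,1)}"
    and X: "X \<in> {Smat, Sinv, Tmat q, Tinv q}"
  shows "Kform q (mvec X (mvec e (mvec P v)))"
proof -
  have q1: "0 < q - 1" "q - 2 < q - 1" using q by auto
  have V0P: "mmul (V q 0) P \<in> Mon q" by (rule mstep[OF P q1(1)])
  have VqP: "mmul (V q (q-2)) P \<in> Mon q" by (rule mstep[OF P q1(2)])
  have SS: "mvec Smat (mvec Smat y) = sc (-1) y" for y by (cases y) (simp add: Smat_def)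
  have SiS: "mvec Sinv (mvec Smat y) = y" for y by (cases y) (simp add: Smat_def Sinv_def)
  have Si: "mvec Sinv y = sc (-1) (mvec Smat y)" for y by (cases y) (simp add: Smat_def Sinv_def)
  have T0: "mvec (Tmat q) y = mvec (V q 0) y" for y using V_0[OF q] by simp
  show ?thesis
  proof -
    consider "X = Smat" | "X = Sinv" | "X = Tmat q" | "X = Tinv q" using X by blast
    then show ?thesis
    proof cases
      case 1
      show ?thesis
      proof (cases "e = mid")
        case True then show ?thesis using 1 P v by (intro Kform_I[of 1 Smat P q v]) auto
      next
        case False then have "e = Smat" using e by auto
        then show ?thesis using 1 P v SS by (intro Kform_I[of "-1" mid P q v]) auto
      qed
    next
      case 2
      show ?thesis
      proof (cases "e = mid")
        case True then show ?thesis using 2 P v Si by (intro Kform_I[of "-1" Smat P q v]) auto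
      next
        case False then have "e = Smat" using e by auto
        then show ?thesis using 2 P v SiS by (intro Kform_I[of 1 mid P q v]) auto
      qed
    next
      case 3
      show ?thesis
      proof (cases "e = mid")
        case True then show ?thesis using 3 V0P v T0
          by (intro Kform_I[of 1 mid "mmul (V q 0) P" q v]) (auto simp: mvec_mmul)
      next
        case False then have eS: "e = Smat" using e by auto
        from P show ?thesis
        proof cases
          case mone
          show ?thesis
          proof (cases "v = (1,0)")
            case True
            have "mvec (Tmat q) (mvec Smat (1,0)) = mvec (mmul (V q 0) mid) (0,1)"
              using V_0[OF q] by (simp add: Tmat_def Smat_def)
            then show ?thesis using True eS mone 3 V0P
              by (intro Kform_I[of 1 mid "mmul (V q 0) mid" q "(0,1)"]) (auto intro: Mon.mstep Mon.mone)
          next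
            case False then have "v = (0,1)" using v by auto
            then show ?thesis using eS mone 3
              by (intro Kform_I[of "-1" mid mid q "(1,0)"]) (auto simp: Tmat_def Smat_def intro: Mon.mone)
          qed
        next
          case (mstep P0 j)
          have eq: "mvec (Tmat q) (mvec Smat (mvec P v)) = mvec (V q (Suc j)) (mvec P0 v)"
            using mstep(1) by (simp add: TSV[OF q, symmetric] mvec_mmul)
          show ?thesis
          proof (cases "Suc j < q - 1")
            case True
            then show ?thesis using eq eS 3 mstep v
              by (intro Kform_I[of 1 mid "mmul (V q (Suc j)) P0" q v]) (auto simp: mvec_mmul intro: Mon.mstep)
          next
            case False
            then have "Suc j = q - 1" using mstep(3) by auto
            then have "V q (Suc j) = Smat" using V_last[OF q] by simp
            then show ?thesis using eq eS 3 mstep v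
              by (intro Kform_I[of 1 Smat P0 q v]) auto
          qed
        qed
      qed
    next
      case 4
      show ?thesis
      proof (cases "e = mid")
        case eM: True
        from P show ?thesis
        proof cases
          case mone
          show ?thesis
          proof (cases "v = (1,0)")
            case True
            then show ?thesis using eM mone 4
              by (intro Kform_I[of 1 mid mid q "(1,0)"]) (auto simp: Tinv_def intro: Mon.mone)
          next
            case False then have v01: "v = (0,1)" using v by auto
            have "mvec (Tinv q) (0,1) = mvec (Tinv q) (mvec Smat (1,0))" by (simp add: Smat_def)
            also have "\<dots> = mvec Smat (mvec (mmul (V q (q-2)) mid) (1,0))" using L2[OF q] by simp
            finally show ?thesis using v01 eM mone 4 VqP
              by (intro Kform_I[of 1 Smat "mmul (V q (q-2)) mid" q "(1,0)"]) auto
          qed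
        next
          case (mstep P0 j)
          show ?thesis
          proof (cases j)
            case 0
            have "mvec (Tinv q) (mvec P v) = mvec P0 v"
              using mstep(1) 0 V_0[OF q] by (simp add: mvec_mmul[symmetric] TinvT mmul_assoc[symmetric])
            then show ?thesis using eM 4 mstep v
              by (intro Kform_I[of 1 mid P0 q v]) auto
          next
            case (Suc j')
            have "mvec (Tinv q) (mvec P v) = mvec Smat (mvec (mmul (V q j') P0) v)"
              using mstep(1) Suc L1[OF q] by (simp add: mvec_mmul)
            then show ?thesis using eM 4 mstep v Suc
              by (intro Kform_I[of 1 Smat "mmul (V q j') P0" q v]) (auto intro: Mon.mstep)
          qed
        qed
      next
        case False then have eS: "e = Smat" using e by auto
        then show ?thesis using 4 VqP v L2[OF q]
          by (intro Kform_I[of 1 Smat "mmul (V q (q-2)) P" q v]) (auto simp: mvec_mmul)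
      qed
    qed
  qed
qed


definition good :: "real \<Rightarrow> bool" where "good x \<longleftrightarrow> x = 0 \<or> 1 \<le> \<bar>x\<bar>"

lemma Kform_good: assumes q: "q \<ge> 3" and "Kform q w" shows "good (fst w) \<and> good (snd w)"
proof -
  obtain s e P v where s: "s\<in>{1,-1}" and e: "e\<in>{mid,Smat}" and P: "P\<in>Mon q"
    and v: "v\<in>{(1,0),(0,1)}" and w: "w = sc s (mvec e (mvec P v))"
    using assms(2) unfolding Kform_def by blast
  obtain a b c d where Pe: "P = (a,b,c,d)" by (cases P rule: prod_cases4)
  have n: "nice0 a" "nice0 b" "nice0 c" "nice0 d" using Mon_nice[OF q P] Pe by auto
  have g: "good a" "good b" "good c" "good d" using n unfolding nice0_def good_def by auto
  have gm: "good (-x) = good x" for x unfolding good_def by auto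
  show ?thesis using s e v g unfolding w Pe by (auto simp: mid_def Smat_def gm)
qed

lemma H_det: "g \<in> Hecke q \<Longrightarrow> mdet g = 1"
  by (induction rule: Hecke.induct)
    (auto simp: mdet_mmul mid_def Smat_def Sinv_def Tmat_def Tinv_def)

lemma H_mul: "g \<in> Hecke q \<Longrightarrow> h \<in> Hecke q \<Longrightarrow> mmul g h \<in> Hecke q"
  by (induction rule: Hecke.induct) (auto simp: mmul_assoc intro: Hecke.gen)

lemma H_gen: "X \<in> {Smat, Sinv, Tmat q, Tinv q} \<Longrightarrow> X \<in> Hecke q"
  using Hecke.gen[OF Hecke.one, of X q] by simp

lemma H_inv: "g \<in> Hecke q \<Longrightarrow> \<exists>g'\<in>Hecke q. mmul g' g = mid \<and> mmul g g' = mid"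
proof (induction rule: Hecke.induct)
  case one then show ?case by (intro bexI[of _ mid]) (auto intro: Hecke.one)
next
  case (gen g X)
  then obtain g' where g': "g' \<in> Hecke q" "mmul g' g = mid" "mmul g g' = mid" by blast
  obtain Xi where Xi: "Xi \<in> {Smat, Sinv, Tmat q, Tinv q}" "mmul Xi X = mid" "mmul X Xi = mid"
    using gen.hyps(2) TinvT TTinv SSinv SinvS by blast
  have "mmul g' Xi \<in> Hecke q" using H_mul[OF g'(1) H_gen[OF Xi(1)]] .
  moreover have "mmul (mmul g' Xi) (mmul X g) = mid"
    by (metis Xi(2) g'(2) mmul_assoc mmul_mid(1))
  moreover have "mmul (mmul X g) (mmul g' Xi) = mid"
    by (metis Xi(3) g'(3) mmul_assoc mmul_mid(1))
  ultimately show ?case by blast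
qed

lemma H_img: assumes "g \<in> Hecke q" shows "img g (Lam q) = Lam q"
proof
  show "img g (Lam q) \<subseteq> Lam q"
  proof
    fix w assume "w \<in> img g (Lam q)"
    then obtain h where h: "h \<in> Hecke q" "w = mvec g (mvec h (1,0))" unfolding img_def Lam_def by blast
    then have "w = mvec (mmul g h) (1,0)" by (simp add: mvec_mmul)
    then show "w \<in> Lam q" using H_mul[OF assms h(1)] unfolding Lam_def by blast
  qed
next
  obtain g' where g': "g' \<in> Hecke q" "mmul g g' = mid" using H_inv[OF assms] by blast
  show "Lam q \<subseteq> img g (Lam q)"
  proof
    fix w assume "w \<in> Lam q"
    then obtain h where h: "h \<in> Hecke q" "w = mvec h (1,0)" unfolding Lam_def by blast
    have "w = mvec g (mvec (mmul g' h) (1,0))" using g'(2) h(2) by (simp add: mvec_mmul[symmetric] mmul_assoc[symmetric])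
    moreover have "mvec (mmul g' h) (1,0) \<in> Lam q" using H_mul[OF g'(1) h(1)] unfolding Lam_def by blast
    ultimately show "w \<in> img g (Lam q)" unfolding img_def by blast
  qed
qed

lemma H_vec: "g \<in> Hecke q \<Longrightarrow> w \<in> Lam q \<Longrightarrow> mvec g w \<in> Lam q"
  using H_img[of g q] unfolding img_def by blast

lemma Lam_K: assumes q: "q \<ge> 3" and "w \<in> Lam q" shows "Kform q w"
proof -
  obtain g where g: "g \<in> Hecke q" "w = mvec g (1,0)" using assms(2) unfolding Lam_def by blast
  have "Kform q (mvec g (1,0))" using g(1)
  proof induction
    case one
    show ?case by (rule Kform_I[of 1 mid mid q "(1,0)"]) (auto intro: Mon.mone)
  next
    case (gen g X)
    then obtain s e P v where s: "s\<in>{1,-1}" and e: "e\<in>{mid,Smat}" and P: "P\<in>Mon q"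
      and v: "v\<in>{(1,0),(0,1)}" and w: "mvec g (1,0) = sc s (mvec e (mvec P v))"
      unfolding Kform_def by blast
    have "Kform q (mvec X (mvec e (mvec P v)))" using core[OF q e P v gen.hyps(2)] .
    then obtain s' e' P' v' where s': "s'\<in>{1,-1}" and e': "e'\<in>{mid,Smat}" and P': "P'\<in>Mon q"
      and v': "v'\<in>{(1,0),(0,1)}" and w': "mvec X (mvec e (mvec P v)) = sc s' (mvec e' (mvec P' v'))"
      unfolding Kform_def by blast
    have "mvec (mmul X g) (1,0) = sc (s*s') (mvec e' (mvec P' v'))"
      by (simp only: mvec_mmul w mvec_sc w' sc_sc)
    then show ?case using s s' e' P' v' by (intro Kform_I[of "s*s'" e' P' q v']) auto
  qed
  then show ?thesis using g by simp
qed

lemma Lam_good: "q \<ge> 3 \<Longrightarrow> w \<in> Lam q \<Longrightarrow> good (fst w) \<and> good (snd w)"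
  using Lam_K Kform_good by blast

lemma e1_Lam: "(1,0) \<in> Lam q"
proof -
  have "(1,0) = mvec mid (1::real,0::real)" by simp
  then show ?thesis unfolding Lam_def using Hecke.one by blast
qed

lemma e2_Lam: "(0,1) \<in> Lam q"
proof -
  have "(0,1) = mvec Smat (1,0)" by (simp add: Smat_def)
  then show ?thesis using H_vec[OF H_gen[of Smat q] e1_Lam] by simp
qed

definition Tp :: "nat \<Rightarrow> int \<Rightarrow> mat2" where "Tp q m = (1, real_of_int m * lam q, 0, 1)"

lemma Tp_Hecke: "Tp q m \<in> Hecke q"
proof -
  have "Tp q (int n) \<in> Hecke q \<and> Tp q (- int n) \<in> Hecke q" for n
  proof (induction n)
    case 0 then show ?case by (simp add: Tp_def mid_def[symmetric] Hecke.one)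
  next
    case (Suc n)
    have a: "Tp q (int (Suc n)) = mmul (Tmat q) (Tp q (int n))" by (simp add: Tp_def Tmat_def algebra_simps)
    have b: "Tp q (- int (Suc n)) = mmul (Tinv q) (Tp q (- int n))" by (simp add: Tp_def Tinv_def algebra_simps)
    show ?case using Suc a b by (auto intro: Hecke.gen)
  qed
  then show ?thesis by (cases m rule: int_cases2) auto
qed

lemma P1: assumes q: "q \<ge> 3" and w: "(x,0) \<in> Lam q" shows "\<bar>x\<bar> = 1"
proof -
  obtain g where g: "g \<in> Hecke q" "(x,0) = mvec g (1,0)" using w unfolding Lam_def by blast
  obtain a b c d where ge: "g = (a,b,c,d)" by (cases g rule: prod_cases4)
  have xa: "x = a" "c = 0" using g(2) ge by auto
  have det: "a*d = 1" using H_det[OF g(1)] ge xa by simp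
  have "mvec Smat (x,0) \<in> Lam q" using H_vec[OF H_gen[of Smat q] w] by simp
  then have "good x" using Lam_good[OF q] by (auto simp: Smat_def)
  moreover have "mvec g (0,1) \<in> Lam q" using H_vec[OF g(1) e2_Lam] .
  then have "good d" using Lam_good[OF q] ge by fastforce
  ultimately have "1 \<le> \<bar>a\<bar>" "1 \<le> \<bar>d\<bar>" using det xa unfolding good_def by auto
  moreover have "\<bar>a\<bar> * \<bar>d\<bar> = 1" using det by (metis abs_mult abs_one)
  ultimately have "\<bar>a\<bar> = 1"
    by (metis abs_ge_zero dual_order.antisym mult_le_cancel_left1 linorder_not_le mult.commute zero_less_one order_less_le_trans)
  then show ?thesis using xa by simp
qed

lemma P2: assumes q: "q \<ge> 3" and w: "(t,1) \<in> Lam q" and tl: "\<bar>t\<bar> < lam q" shows "t = 0"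
proof -
  have l: "0 < lam q" "lam q < 2" using lam_bounds[OF q] by auto
  obtain m :: int where m: "\<bar>t - real_of_int m * lam q\<bar> < 1" "m \<in> {-1,0,1}"
  proof -
    consider "t \<ge> lam q / 2" | "t \<le> - lam q / 2" | "\<bar>t\<bar> < lam q / 2" by linarith
    then show ?thesis
    proof cases
      case 1 then show ?thesis using that[of 1] tl l by auto
    next
      case 2 then show ?thesis using that[of "-1"] tl l by auto
    next
      case 3 then show ?thesis using that[of 0] tl l by auto
    qed
  qed
  have "mvec (Tp q (-m)) (t,1) \<in> Lam q" using H_vec[OF Tp_Hecke w] .
  then have "good (t - real_of_int m * lam q)" using Lam_good[OF q] by (auto simp: Tp_def)
  then have "t = real_of_int m * lam q" using m(1) unfolding good_def by auto
  then show ?thesis using m(2) tl by auto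
qed


lemma uniq: assumes q: "q \<ge> 3" and p: "p \<in> Tq q" and p': "p' \<in> Tq q"
  and eq: "img (gmat p) (Lam q) = img (gmat p') (Lam q)" shows "p = p'"
proof -
  obtain a b where pe: "p = (a,b)" by (cases p)
  obtain a' b' where pe': "p' = (a',b')" by (cases p')
  have pa: "0 < a" "a \<le> 1" "1 - lam q * a < b" "b \<le> 1" using p pe by (auto simp: Tq_def)
  have pa': "0 < a'" "a' \<le> 1" "1 - lam q * a' < b'" "b' \<le> 1" using p' pe' by (auto simp: Tq_def)
  have "mvec (gmat p) (1,0) \<in> img (gmat p') (Lam q)" using eq e1_Lam unfolding img_def by blast
  then obtain w1 w2 where w: "(w1,w2) \<in> Lam q" "mvec (gmat p) (1,0) = mvec (gmat p') (w1,w2)"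
    unfolding img_def by auto
  then have "w2 = 0" "a' * w1 = a" using pa' by (auto simp: gmat_def pe pe')
  then have "\<bar>w1\<bar> = 1" using P1[OF q] w(1) by auto
  then have "\<bar>a / a'\<bar> = 1" using \<open>a' * w1 = a\<close> pa' by (auto simp: abs_mult)
  then have aa: "a = a'" using pa pa' by (auto simp: field_simps split: abs_split)
  have "mvec (gmat p) (0,1) \<in> img (gmat p') (Lam q)" using eq e2_Lam unfolding img_def by blast
  then obtain z1 z2 where z: "(z1,z2) \<in> Lam q" "mvec (gmat p) (0,1) = mvec (gmat p') (z1,z2)"
    unfolding img_def by auto
  then have "z2 = 1" "a * z1 + b' = b" using pa aa by (auto simp: gmat_def pe pe' field_simps)
  moreover have "\<bar>b - b'\<bar> < lam q * a" using pa pa' aa by auto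
  ultimately have "\<bar>z1\<bar> < lam q" using pa
    by (metis abs_mult add_diff_cancel_right' abs_of_pos mult.commute mult_less_cancel_right_pos)
  then have "z1 = 0" using P2[OF q] z(1) \<open>z2 = 1\<close> by auto
  then have "b = b'" using \<open>a * z1 + b' = b\<close> by simp
  then show ?thesis using aa pe pe' by simp
qed

lemma exist: assumes q: "q \<ge> 3" and B: "mdet B = 1" and cB: "(c,0) \<in> img B (Lam q)"
  and c: "0 < c" "c \<le> 1"
  shows "\<exists>b. (c,b) \<in> Tq q \<and> img B (Lam q) = img (gmat (c,b)) (Lam q)"
proof -
  obtain g where g: "g \<in> Hecke q" "(c,0) = mvec B (mvec g (1,0))"
    using cB unfolding img_def Lam_def by blast
  obtain c1 c2 c3 c4 where C: "mmul B g = (c1,c2,c3,c4)" by (cases "mmul B g" rule: prod_cases4)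
  have "(c,0) = mvec (mmul B g) (1,0)" using g(2) by (simp add: mvec_mmul)
  then have cc: "c1 = c" "c3 = 0" using C by auto
  have "mdet (mmul B g) = 1" using B H_det[OF g(1)] by (simp add: mdet_mmul)
  then have c4: "c4 = 1/c" using C cc c by (simp add: field_simps)
  have l: "0 < lam q" using lam_bounds[OF q] by simp
  define m where "m = \<lfloor>(1 - c2) / (c * lam q)\<rfloor>"
  have cl: "0 < c * lam q" using c l by simp
  have m1: "real_of_int m * (c * lam q) \<le> 1 - c2"
    using cl by (metis m_def of_int_floor_le pos_le_divide_eq)
  have m2: "1 - c2 < (real_of_int m + 1) * (c * lam q)"
    using cl by (metis m_def real_of_int_floor_add_one_gt pos_divide_less_eq)
  define b where "b = c2 + c * real_of_int m * lam q"
  have Tq: "(c,b) \<in> Tq q" using m1 m2 c unfolding Tq_def b_def by (auto simp: algebra_simps)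
  have "img B (Lam q) = img B (img g (Lam q))" using H_img[OF g(1)] by simp
  also have "\<dots> = img (mmul B g) (Lam q)" by (simp add: img_mmul)
  also have "\<dots> = img (mmul B g) (img (Tp q m) (Lam q))" using H_img[OF Tp_Hecke] by simp
  also have "\<dots> = img (mmul (mmul B g) (Tp q m)) (Lam q)" by (simp add: img_mmul)
  also have "mmul (mmul B g) (Tp q m) = gmat (c,b)"
    using C cc c4 by (simp add: Tp_def gmat_def b_def algebra_simps)
  finally show ?thesis using Tq by blast
qed



lemma key_mat: assumes t: "\<tau> > 0" and R: "R = \<tau>^2 * (s' - s)"
  shows "mmul (hmat R) (mmul (smat (1/\<tau>)) (hmat s)) = mmul (smat (1/\<tau>)) (hmat s')"
  using t unfolding R by (simp add: hmat_def smat_def field_simps power2_eq_square)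

lemma phi_eq: "mvec (mmul (smat (1/\<tau>)) (hmat s)) (x,y) = (x/\<tau>, \<tau> * (y - s * x))"
  by (simp add: hmat_def smat_def algebra_simps)

theorem mainTheorem8:
  fixes q :: nat and A :: mat2 and \<tau> :: real and u :: "nat \<Rightarrow> vec2"
  assumes hq: "q \<ge> 3"
    and hA: "mdet A = 1"
    and htau: "\<tau> > 0"
    and hne: "img A (Lam q) \<inter> Strip \<tau> \<noteq> {}"
    and hu: "\<forall>n. u n \<in> img A (Lam q) \<inter> Strip \<tau>"
    and hsucc: "\<forall>n. slope (u n) < slope (u (Suc n)) \<and>
       (\<forall>w \<in> img A (Lam q) \<inter> Strip \<tau>. slope (u n) < slope w \<longrightarrow> slope (u (Suc n)) \<le> slope w)"
  shows
    "(fst (u 0) / \<tau>, 0) \<in> img (mmul (smat (1/\<tau>)) (mmul (hmat (slope (u 0))) A)) (Lam q)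
     \<and> (fst (u 0) / \<tau>, 0) \<in> Strip 1
     \<and> (\<exists>!p. p \<in> Tq q \<and>
          img (mmul (smat (1/\<tau>)) (mmul (hmat (slope (u 0))) A)) (Lam q) = img (gmat p) (Lam q))
     \<and> (\<forall>n.
          (fst (u n) / \<tau>, 0) \<in> img (mmul (smat (1/\<tau>)) (mmul (hmat (slope (u n))) A)) (Lam q)
        \<and> (fst (u n) / \<tau>, 0) \<in> Strip 1
        \<and> img (mmul (smat (1/\<tau>)) (mmul (hmat (slope (u n))) A)) (Lam q)
            = img (gmat ((BCZ q ^^ n) (FTR q A \<tau> (u 0)))) (Lam q)
        \<and> FTR q A \<tau> (u n) = (BCZ q ^^ n) (FTR q A \<tau> (u 0)))
     \<and> (\<forall>n.
          fst (u n) = \<tau> * fst ((BCZ q ^^ n) (FTR q A \<tau> (u 0)))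
        \<and> snd (u (Suc n)) = fst (u (Suc n)) *
            (snd (u n) / fst (u n) + roof q ((BCZ q ^^ n) (FTR q A \<tau> (u 0))) / \<tau>^2))"
proof -
  define s where "s n = slope (u n)" for n
  define N where "N n = mmul (smat (1/\<tau>)) (hmat (s n))" for n
  define M where "M n = mmul (smat (1/\<tau>)) (mmul (hmat (s n)) A)" for n
  define P where "P n = FTR q A \<tau> (u n)" for n
  have MN: "M n = mmul (N n) A" for n unfolding M_def N_def by (simp add: mmul_assoc)
  have imgM: "img (M n) (Lam q) = img (N n) (img A (Lam q))" for n
    unfolding MN by (simp add: img_mmul)
  have xpos: "0 < fst (u n)" "fst (u n) \<le> \<tau>" for n using hu unfolding Strip_def by auto
  have detM: "mdet (M n) = 1" for n
    using hA htau unfolding M_def by (simp add: mdet_mmul hmat_def smat_def)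
  have hor: "(fst (u n) / \<tau>, 0) \<in> img (M n) (Lam q)" for n
  proof -
    obtain x y where uxy: "u n = (x,y)" by (cases "u n")
    have "mvec (N n) (u n) = (fst (u n) / \<tau>, 0)"
      using xpos[of n] uxy unfolding N_def s_def slope_def by (simp add: phi_eq)
    moreover have "u n \<in> img A (Lam q)" using hu by auto
    ultimately have "(fst (u n) / \<tau>, 0) \<in> img (N n) (img A (Lam q))" unfolding img_def by force
    then show ?thesis using imgM[of n] by simp
  qed
  have str: "(fst (u n) / \<tau>, 0) \<in> Strip 1" for n
    using xpos[of n] htau by (simp add: Strip_def)
  have cpos: "0 < fst (u n) / \<tau>" "fst (u n) / \<tau> \<le> 1" for n
    using xpos[of n] htau by auto
  have ex1: "\<exists>!p. p \<in> Tq q \<and> img (M n) (Lam q) = img (gmat p) (Lam q)" for n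
  proof -
    obtain b where b: "(fst (u n) / \<tau>, b) \<in> Tq q" "img (M n) (Lam q) = img (gmat (fst (u n) / \<tau>, b)) (Lam q)"
      using exist[OF hq detM hor cpos[of n]] by auto
    show ?thesis
    proof (rule ex1I[of _ "(fst (u n) / \<tau>, b)"])
      show "(fst (u n) / \<tau>, b) \<in> Tq q \<and> img (M n) (Lam q) = img (gmat (fst (u n) / \<tau>, b)) (Lam q)" using b by simp
      fix p assume pp: "p \<in> Tq q \<and> img (M n) (Lam q) = img (gmat p) (Lam q)"
      then have "img (gmat p) (Lam q) = img (gmat (fst (u n) / \<tau>, b)) (Lam q)" using b(2) by simp
      then show "p = (fst (u n) / \<tau>, b)" using uniq[OF hq conjunct1[OF pp] b(1)] by simp
    qed
  qed
  have Pn: "P n \<in> Tq q \<and> img (M n) (Lam q) = img (gmat (P n)) (Lam q)" for n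
    using theI'[OF ex1[of n]] unfolding P_def FTR_def M_def s_def by simp
  have fstP: "fst (P n) = fst (u n) / \<tau>" for n
  proof -
    obtain b where b: "(fst (u n) / \<tau>, b) \<in> Tq q" "img (M n) (Lam q) = img (gmat (fst (u n) / \<tau>, b)) (Lam q)"
      using exist[OF hq detM hor cpos[of n]] by auto
    have "img (gmat (P n)) (Lam q) = img (gmat (fst (u n) / \<tau>, b)) (Lam q)" using b(2) Pn[of n] by simp
    then have "P n = (fst (u n) / \<tau>, b)" using uniq[OF hq conjunct1[OF Pn[of n]] b(1)] by simp
    then show ?thesis by simp
  qed
  define R where "R n = \<tau>^2 * (s (Suc n) - s n)" for n
  have slopeN: "slope (mvec (N n) z) = \<tau>^2 * (slope z - s n)" if "0 < fst z" for n z
  proof -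
    obtain x y where z: "z = (x,y)" by (cases z)
    show ?thesis using that htau unfolding z N_def phi_eq slope_def
      by (simp add: field_simps power2_eq_square)
  qed
  have stripN: "mvec (N n) z \<in> Strip 1 \<longleftrightarrow> z \<in> Strip \<tau>" for n z
  proof -
    obtain x y where z: "z = (x,y)" by (cases z)
    show ?thesis using htau unfolding z N_def phi_eq Strip_def by (simp add: field_simps)
  qed
  have roofP: "roof q (P n) = R n" for n
  proof -
    have G: "img (gmat (P n)) (Lam q) = img (N n) (img A (Lam q))" using Pn[of n] imgM by simp
    let ?Pr = "\<lambda>r. \<exists>v \<in> img (gmat (P n)) (Lam q) \<inter> Strip 1. slope v = r \<and> 0 < r \<and>
       (\<forall>w \<in> img (gmat (P n)) (Lam q) \<inter> Strip 1. 0 < slope w \<longrightarrow> r \<le> slope w)"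
    have "s n < s (Suc n)" using hsucc unfolding s_def by blast
    then have Rpos: "0 < R n" unfolding R_def using htau by simp
    have minR: "R n \<le> slope w" if "w \<in> img (gmat (P n)) (Lam q) \<inter> Strip 1" "0 < slope w" for w
    proof -
      have "w \<in> img (N n) (img A (Lam q))" using that(1) G by simp
      then obtain z where z: "z \<in> img A (Lam q)" "w = mvec (N n) z" unfolding img_def by (rule imageE)
      have "mvec (N n) z \<in> Strip 1" using that(1) z by blast
      then have zs: "z \<in> Strip \<tau>" using stripN by blast
      then have "0 < fst z" by (simp add: Strip_def)
      then have sw: "slope w = \<tau>^2 * (slope z - s n)" using z slopeN by simp
      then have "s n < slope z" using that(2) htau by (simp add: zero_less_mult_iff)
      moreover have "\<forall>w \<in> img A (Lam q) \<inter> Strip \<tau>. slope (u n) < slope w \<longrightarrow> slope (u (Suc n)) \<le> slope w"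
        using hsucc by blast
      ultimately have "s (Suc n) \<le> slope z" using z(1) zs unfolding s_def by blast
      then show ?thesis unfolding sw R_def using htau by (simp add: mult_left_mono)
    qed
    have vR: "mvec (N n) (u (Suc n)) \<in> img (gmat (P n)) (Lam q) \<inter> Strip 1"
    proof -
      have a: "u (Suc n) \<in> img A (Lam q)" "u (Suc n) \<in> Strip \<tau>" using hu by blast+
      then have "mvec (N n) (u (Suc n)) \<in> Strip 1" using stripN by blast
      moreover have "mvec (N n) (u (Suc n)) \<in> img (N n) (img A (Lam q))" using a(1) unfolding img_def by (rule imageI)
      ultimately show ?thesis using G by simp
    qed
    have svR: "slope (mvec (N n) (u (Suc n))) = R n"
      using slopeN xpos unfolding R_def s_def by simp
    have "?Pr (R n)" using vR svR Rpos minR by blast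
    moreover have "r = R n" if Pr: "?Pr r" for r
    proof -
      obtain v where v: "v \<in> img (gmat (P n)) (Lam q) \<inter> Strip 1" "slope v = r" "0 < r"
        "\<forall>w \<in> img (gmat (P n)) (Lam q) \<inter> Strip 1. 0 < slope w \<longrightarrow> r \<le> slope w" using Pr by blast
      have "0 < slope (mvec (N n) (u (Suc n)))" using svR Rpos by simp
      then have "r \<le> slope (mvec (N n) (u (Suc n)))" using v(4) vR by blast
      then have "r \<le> R n" using svR by simp
      moreover have "R n \<le> r" using minR[OF v(1)] v(2,3) by simp
      ultimately show ?thesis by simp
    qed
    ultimately show ?thesis unfolding roof_def by (rule the_equality)
  qed
  have step: "BCZ q (P n) = P (Suc n)" for n
  proof -
    have "img (mmul (hmat (roof q (P n))) (gmat (P n))) (Lam q) = img (hmat (R n)) (img (M n) (Lam q))"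
      using Pn[of n] by (simp add: roofP img_mmul)
    also have "\<dots> = img (mmul (mmul (hmat (R n)) (N n)) A) (Lam q)"
      by (simp add: img_mmul MN)
    also have "mmul (hmat (R n)) (N n) = N (Suc n)"
      unfolding N_def by (rule key_mat[OF htau]) (simp add: R_def)
    also have "img (mmul (N (Suc n)) A) (Lam q) = img (gmat (P (Suc n))) (Lam q)"
      using Pn[of "Suc n"] MN by simp
    finally have e: "img (mmul (hmat (roof q (P n))) (gmat (P n))) (Lam q) = img (gmat (P (Suc n))) (Lam q)" .
    show ?thesis unfolding BCZ_def
    proof (rule the_equality)
      show "P (Suc n) \<in> Tq q \<and> img (mmul (hmat (roof q (P n))) (gmat (P n))) (Lam q) = img (gmat (P (Suc n))) (Lam q)"
        using Pn e by simp
      fix r assume rr: "r \<in> Tq q \<and> img (mmul (hmat (roof q (P n))) (gmat (P n))) (Lam q) = img (gmat r) (Lam q)"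
      then have "img (gmat r) (Lam q) = img (gmat (P (Suc n))) (Lam q)" using e by simp
      then show "r = P (Suc n)" using uniq[OF hq conjunct1[OF rr] conjunct1[OF Pn[of "Suc n"]]] by simp
    qed
  qed
  have iter: "(BCZ q ^^ n) (P 0) = P n" for n
    by (induction n) (simp_all add: step)
  show ?thesis
  proof (intro conjI allI)
    show "(fst (u 0) / \<tau>, 0) \<in> img (mmul (smat (1/\<tau>)) (mmul (hmat (slope (u 0))) A)) (Lam q)"
      using hor[of 0] unfolding M_def s_def .
    show "(fst (u 0) / \<tau>, 0) \<in> Strip 1" by (rule str)
    show "\<exists>!p. p \<in> Tq q \<and> img (mmul (smat (1/\<tau>)) (mmul (hmat (slope (u 0))) A)) (Lam q) = img (gmat p) (Lam q)"
      using ex1[of 0] unfolding M_def s_def .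
    fix n
    show "(fst (u n) / \<tau>, 0) \<in> img (mmul (smat (1/\<tau>)) (mmul (hmat (slope (u n))) A)) (Lam q)"
      using hor[of n] unfolding M_def s_def .
    show "(fst (u n) / \<tau>, 0) \<in> Strip 1" by (rule str)
    show "img (mmul (smat (1/\<tau>)) (mmul (hmat (slope (u n))) A)) (Lam q)
            = img (gmat ((BCZ q ^^ n) (FTR q A \<tau> (u 0)))) (Lam q)"
      using Pn[of n] iter[of n] unfolding M_def s_def P_def by simp
    show "FTR q A \<tau> (u n) = (BCZ q ^^ n) (FTR q A \<tau> (u 0))"
      using iter[of n] unfolding P_def by simp
  next
    fix n
    show "fst (u n) = \<tau> * fst ((BCZ q ^^ n) (FTR q A \<tau> (u 0)))"
      using iter[of n] fstP[of n] htau unfolding P_def by simp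
    have "roof q ((BCZ q ^^ n) (FTR q A \<tau> (u 0))) / \<tau>^2 = s (Suc n) - s n"
      using iter[of n] roofP[of n] htau unfolding P_def R_def by simp
    moreover have "snd (u n) / fst (u n) = s n" unfolding s_def slope_def ..
    moreover have "fst (u (Suc n)) * s (Suc n) = snd (u (Suc n))"
      using xpos[of "Suc n"] unfolding s_def slope_def by simp
    ultimately show "snd (u (Suc n)) = fst (u (Suc n)) *
            (snd (u n) / fst (u n) + roof q ((BCZ q ^^ n) (FTR q A \<tau> (u 0))) / \<tau>^2)" by simp
  qed
qed

end
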